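(* Let $G$ be a group and let $S=\bigoplus_{g\in G}S_g$ be virtually epsilon-strongly $G$-graded where, for each $g\in G$, $M_g$ is a set of pairwise orthogonal, commuting idempotents such that $E_g=\bigvee M_g$ is a set of local units for $S_gS_{g^{-1}}$. Then for every $g\in G$ and $s\in S_g$ there exist $m_1,\dots,m_i\in M_g$ and $m_1',\dots,m_j'\in M_{g^{-1}}$ such that $(m_1\vee\cdots\vee m_i)s=s$ and $s(m_1'\vee\cdots\vee m_j')=s$.
   Context: Rings are associative, not necessarily unital; $AB$ denotes finite sums of products. A $G$-grading: $S=\bigoplus_gS_g$, $S_gS_h\subseteq S_{gh}$. Idempotents are ordered by $a\le b$ iff $a=ab=ba$; $\vee$ is the least upper bound; $\bigvee M$ is the set of finite joins of elements of $M$. A set of local units for a ring $R$ is a $\vee$-closed set of pairwise commuting idempotents of $R$ such that every $r\in R$ has some $f$ in it with $fr=rf=r$. The grading is virtually epsilon-strong if $S_gS_{g^{-1}}S_g=S_g$ for all $g$ and each $S_gS_{g^{-1}}$ has enough idempotents (a set of pairwise orthogonal commuting idempotents whose $\vee$-closure is a set of local units). *)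

theory Defs
  imports Main "HOL-Algebra.Group"
begin

text \<open>Rings: Isabelle's type class ring is an associative, not necessarily unital ring.
  The group G is a HOL-Algebra group; the ring S is the whole carrier type.\<close>

definition setmult :: "('a::ring) set \<Rightarrow> 'a set \<Rightarrow> 'a set" where
  "setmult A B = {x. \<exists>(n::nat) a b. (\<forall>i<n. a i \<in> A \<and> b i \<in> B) \<and> x = (\<Sum>i<n. a i * b i)}"

definition add_subgroup :: "('a::ring) set \<Rightarrow> bool" where
  "add_subgroup A \<longleftrightarrow> 0 \<in> A \<and> (\<forall>x\<in>A. \<forall>y\<in>A. x + y \<in> A) \<and> (\<forall>x\<in>A. - x \<in> A)"

definition is_grading :: "('g, 'b) monoid_scheme \<Rightarrow> ('g \<Rightarrow> ('a::ring) set) \<Rightarrow> bool" where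
  "is_grading G Sg \<longleftrightarrow>
     (\<forall>g\<in>carrier G. add_subgroup (Sg g)) \<and>
     (\<forall>g\<in>carrier G. \<forall>h\<in>carrier G. setmult (Sg g) (Sg h) \<subseteq> Sg (g \<otimes>\<^bsub>G\<^esub> h)) \<and>
     (\<forall>s::'a. \<exists>F c. finite F \<and> F \<subseteq> carrier G \<and> (\<forall>g\<in>F. c g \<in> Sg g) \<and> s = (\<Sum>g\<in>F. c g)) \<and>
     (\<forall>F c. finite F \<and> F \<subseteq> carrier G \<and> (\<forall>g\<in>F. c g \<in> Sg g) \<and> (\<Sum>g\<in>F. c g) = 0
            \<longrightarrow> (\<forall>g\<in>F. c g = 0))"

definition idem :: "'a::ring \<Rightarrow> bool" where
  "idem e \<longleftrightarrow> e * e = e"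

definition idem_le :: "'a::ring \<Rightarrow> 'a \<Rightarrow> bool" where
  "idem_le a b \<longleftrightarrow> a = a * b \<and> a = b * a"

definition is_lub :: "('a::ring) set \<Rightarrow> 'a \<Rightarrow> bool" where
  "is_lub F c \<longleftrightarrow> idem c \<and> (\<forall>x\<in>F. idem_le x c) \<and>
      (\<forall>d. idem d \<and> (\<forall>x\<in>F. idem_le x d) \<longrightarrow> idem_le c d)"

definition joins :: "('a::ring) set \<Rightarrow> 'a set" where
  "joins M = {c. \<exists>F. finite F \<and> F \<noteq> {} \<and> F \<subseteq> M \<and> is_lub F c}"

definition commuting_idems :: "('a::ring) set \<Rightarrow> bool" where
  "commuting_idems E \<longleftrightarrow> (\<forall>e\<in>E. idem e) \<and> (\<forall>e\<in>E. \<forall>f\<in>E. e * f = f * e)"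

definition orthogonal :: "('a::ring) set \<Rightarrow> bool" where
  "orthogonal E \<longleftrightarrow> (\<forall>e\<in>E. \<forall>f\<in>E. e \<noteq> f \<longrightarrow> e * f = 0)"

definition local_units :: "('a::ring) set \<Rightarrow> 'a set \<Rightarrow> bool" where
  "local_units R E \<longleftrightarrow> E \<subseteq> R \<and> commuting_idems E \<and>
     (\<forall>e\<in>E. \<forall>f\<in>E. \<exists>c\<in>E. is_lub {e, f} c) \<and>
     (\<forall>r\<in>R. \<exists>f\<in>E. f * r = r \<and> r * f = r)"

definition enough_idems :: "('a::ring) set \<Rightarrow> bool" where
  "enough_idems R \<longleftrightarrow> (\<exists>M. M \<subseteq> R \<and> commuting_idems M \<and> orthogonal M \<and> local_units R (joins M))"

definition virt_eps_strong :: "('g, 'b) monoid_scheme \<Rightarrow> ('g \<Rightarrow> ('a::ring) set) \<Rightarrow> bool" where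
  "virt_eps_strong G Sg \<longleftrightarrow>
     (\<forall>g\<in>carrier G. setmult (setmult (Sg g) (Sg (inv\<^bsub>G\<^esub> g))) (Sg g) = Sg g) \<and>
     (\<forall>g\<in>carrier G. enough_idems (setmult (Sg g) (Sg (inv\<^bsub>G\<^esub> g))))"

end

theory Submission
  imports Defs
begin

lemma common_unit:
  assumes lu: "local_units R E" and z: "(0::'a::ring) \<in> R"
    and fin: "finite X" and sub: "X \<subseteq> R"
  shows "\<exists>c\<in>E. \<forall>r\<in>X. c * r = r \<and> r * c = r"
  using fin sub
proof (induction X rule: finite_induct)
  case empty
  from lu z obtain f where "f \<in> E" unfolding local_units_def by blast
  then show ?case by blast
next
  case (insert x X)
  then obtain c where c: "c \<in> E" "\<forall>r\<in>X. c * r = r \<and> r * c = r" by blast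
  from insert lu obtain f where f: "f \<in> E" "f * x = x" "x * f = x"
    unfolding local_units_def by blast
  from lu c f obtain d where d: "d \<in> E" "is_lub {c, f} d"
    unfolding local_units_def by blast
  then have cd: "c = c * d" "c = d * c" and fd: "f = f * d" "f = d * f"
    unfolding is_lub_def idem_le_def by auto
  have "\<forall>r\<in>insert x X. d * r = r \<and> r * d = r"
  proof
    fix r assume "r \<in> insert x X"
    then show "d * r = r \<and> r * d = r"
    proof
      assume "r = x"
      then show ?thesis using f fd
        by (metis mult.assoc)
    next
      assume "r \<in> X"
      then show ?thesis using c cd
        by (metis mult.assoc)
    qed
  qed
  then show ?case using d by blast
qed

lemma zero_setmult: "(0::'a::ring) \<in> setmult A B"
  unfolding setmult_def by (rule CollectI, rule exI[of _ 0]) simp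

lemma prod_setmult: "a \<in> A \<Longrightarrow> b \<in> B \<Longrightarrow> (a * b :: 'a::ring) \<in> setmult A B"
  unfolding setmult_def
  by (rule CollectI, rule exI[of _ 1], rule exI[of _ "\<lambda>_. a"], rule exI[of _ "\<lambda>_. b"]) simp

theorem lemma5p12:
  fixes G :: "('g, 'b) monoid_scheme" and Sg :: "'g \<Rightarrow> ('a::ring) set" and M :: "'g \<Rightarrow> 'a set"
  assumes "group G"
    and "is_grading G Sg"
    and "virt_eps_strong G Sg"
    and "\<forall>g\<in>carrier G. M g \<subseteq> setmult (Sg g) (Sg (inv\<^bsub>G\<^esub> g)) \<and> commuting_idems (M g) \<and> orthogonal (M g)
            \<and> local_units (setmult (Sg g) (Sg (inv\<^bsub>G\<^esub> g))) (joins (M g))"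
    and "g \<in> carrier G" and "s \<in> Sg g"
  shows "\<exists>F F' c c'. finite F \<and> F \<noteq> {} \<and> F \<subseteq> M g \<and> is_lub F c \<and>
           finite F' \<and> F' \<noteq> {} \<and> F' \<subseteq> M (inv\<^bsub>G\<^esub> g) \<and> is_lub F' c' \<and>
           c * s = s \<and> s * c' = s"
proof -
  let ?h = "inv\<^bsub>G\<^esub> g"
  have hG: "?h \<in> carrier G" using assms(1,5) by (simp add: group.inv_closed)
  have hh: "inv\<^bsub>G\<^esub> ?h = g" using assms(1,5) by (simp add: group.inv_inv)
  have lu1: "local_units (setmult (Sg g) (Sg ?h)) (joins (M g))" using assms(4,5) by blast
  have lu2: "local_units (setmult (Sg ?h) (Sg g)) (joins (M ?h))" using assms(4) hG hh by force
  have "s \<in> setmult (setmult (Sg g) (Sg ?h)) (Sg g)"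
    using assms(3,5,6) unfolding virt_eps_strong_def by blast
  then obtain n :: nat and a b where ab: "\<forall>i<n. a i \<in> setmult (Sg g) (Sg ?h) \<and> b i \<in> Sg g"
    and s: "s = (\<Sum>i<n. a i * b i)"
    unfolding setmult_def by blast
  obtain c where c: "c \<in> joins (M g)" "\<forall>r\<in>a ` {..<n}. c * r = r \<and> r * c = r"
    using common_unit[OF lu1 zero_setmult, of "a ` {..<n}"] ab by blast
  have cs: "c * s = s"
    unfolding s sum_distrib_left using c(2)
    by (intro sum.cong) (auto simp: mult.assoc[symmetric])
  have "\<forall>i<n. \<exists>(m::nat) x y. (\<forall>j<m. x j \<in> Sg g \<and> y j \<in> Sg ?h) \<and> a i = (\<Sum>j<m. x j * y j)"
    using ab unfolding setmult_def by blast
  then obtain m :: "nat \<Rightarrow> nat" and x y where xy: "\<forall>i<n. (\<forall>j<m i. x i j \<in> Sg g \<and> y i j \<in> Sg ?h) \<and> a i = (\<Sum>j<m i. x i j * y i j)"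
    by metis
  define X where "X = (\<Union>i<n. (\<lambda>j. y i j * b i) ` {..<m i})"
  have finX: "finite X" unfolding X_def by auto
  have subX: "X \<subseteq> setmult (Sg ?h) (Sg g)"
    unfolding X_def using xy ab by (auto intro!: prod_setmult)
  obtain c' where c': "c' \<in> joins (M ?h)" "\<forall>r\<in>X. c' * r = r \<and> r * c' = r"
    using common_unit[OF lu2 zero_setmult finX subX] by blast
  have "s * c' = (\<Sum>i<n. \<Sum>j<m i. x i j * (y i j * b i * c'))"
    unfolding s sum_distrib_right
    by (intro sum.cong refl) (simp add: xy sum_distrib_right mult.assoc)
  also have "\<dots> = (\<Sum>i<n. \<Sum>j<m i. x i j * (y i j * b i))"
    using c'(2) unfolding X_def by (intro sum.cong refl) auto
  also have "\<dots> = s"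
    unfolding s
    by (intro sum.cong refl) (simp add: xy sum_distrib_right mult.assoc)
  finally have sc: "s * c' = s" .
  from c(1) c'(1) cs sc show ?thesis unfolding joins_def by blast
qed

end
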